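(* The function $\check J$ attains its minimum on $\mathcal M_T$, i.e., the problem $\min_{(\Sigma_{\rho_0},\dots,\Sigma_{\rho_{T-1}})\in\mathcal M_T}\check J(\Sigma_{\rho_0},\dots,\Sigma_{\rho_{T-1}})$ has at least one optimal solution.
   Context: Fix integers $n,m,T\ge 1$, a scalar $\varepsilon>0$, matrices $A_k\in\mathbb R^{n\times n}$, $B_k\in\mathbb R^{n\times m}$ ($k=0,\dots,T-1$), and symmetric positive definite matrices $R_k\in\mathbb R^{m\times m}$, $\Sigma_{w_k}\in\mathbb R^{n\times n}$ ($k=0,\dots,T-1$), $F,\Sigma_{x_{\mathrm{ini}}}\in\mathbb R^{n\times n}$. Let $\mathbb S^m_{\succeq0}$ be the set of symmetric positive semidefinite $m\times m$ matrices and $\mathcal M_T=(\mathbb S^m_{\succeq 0})^T$; $\Sigma^{1/2}$ denotes the PSD square root and $|\cdot|$ the determinant. For $(\Sigma_{\rho_0},\dots,\Sigma_{\rho_{T-1}})\in\mathcal M_T$ define backwards $\Pi_T=F$ and for $k=T-1,\dots,0$: $C_k=(R_k+B_k^\top\Pi_{k+1}B_k)/\varepsilon$, $\Pi_k=A_k^\top\Pi_{k+1}A_k-\frac1\varepsilon A_k^\top\Pi_{k+1}B_k\Sigma_{\rho_k}^{1/2}(I+\Sigma_{\rho_k}^{1/2}C_k\Sigma_{\rho_k}^{1/2})^{-1}\Sigma_{\rho_k}^{1/2}B_k^\top\Pi_{k+1}A_k$, and $\Sigma_{Q_k}=\varepsilon(R_k+B_k^\top\Pi_{k+1}B_k)^{-1}$.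 Define $\check J(\Sigma_{\rho_0},\dots,\Sigma_{\rho_{T-1}})=\frac12\Big[\mathrm{Tr}(\Pi_0\Sigma_{x_{\mathrm{ini}}})+\sum_{k=0}^{T-1}\Big(\varepsilon\log\frac{|\Sigma_{\rho_k}+\Sigma_{Q_k}|}{|\Sigma_{Q_k}|}+\mathrm{Tr}(\Pi_{k+1}\Sigma_{w_k})\Big)\Big]$. *)

theory Defs
  imports "HOL-Analysis.Analysis"
begin

definition psd_mat :: "real^'a^'a \<Rightarrow> bool" where
  "psd_mat M \<longleftrightarrow> transpose M = M \<and> (\<forall>x. 0 \<le> x \<bullet> (M *v x))"

definition pd_mat :: "real^'a^'a \<Rightarrow> bool" where
  "pd_mat M \<longleftrightarrow> transpose M = M \<and> (\<forall>x. x \<noteq> 0 \<longrightarrow> 0 < x \<bullet> (M *v x))"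

definition msqrt :: "real^'a^'a \<Rightarrow> real^'a^'a" where
  "msqrt M = (THE S. psd_mat S \<and> S ** S = M)"

(* C_k = (R_k + B_k^T P B_k)/eps, where P = Pi_{k+1} *)
definition Cmat :: "real \<Rightarrow> real^'m^'m \<Rightarrow> real^'m^'n \<Rightarrow> real^'n^'n \<Rightarrow> real^'m^'m" where
  "Cmat eps Rk Bk P = (1/eps) *\<^sub>R (Rk + transpose Bk ** P ** Bk)"

(* one backward Riccati-type step: Pi_k from P = Pi_{k+1} and Sigma_rho_k = S *)
definition Pi_step :: "real \<Rightarrow> real^'n^'n \<Rightarrow> real^'m^'n \<Rightarrow> real^'m^'m \<Rightarrow> real^'m^'m
    \<Rightarrow> real^'n^'n \<Rightarrow> real^'n^'n" where
  "Pi_step eps Ak Bk Rk S P =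
     transpose Ak ** P ** Ak
     - (1/eps) *\<^sub>R (transpose Ak ** P ** Bk ** msqrt S
         ** matrix_inv (mat 1 + msqrt S ** Cmat eps Rk Bk P ** msqrt S)
         ** msqrt S ** transpose Bk ** P ** Ak)"

(* Pi_aux j = Pi_{T-j}:  Pi_aux 0 = Pi_T = F,  Pi_aux (j+1) = Pi_{T-j-1} *)
fun Pi_aux :: "real \<Rightarrow> (nat \<Rightarrow> real^'n^'n) \<Rightarrow> (nat \<Rightarrow> real^'m^'n) \<Rightarrow> (nat \<Rightarrow> real^'m^'m)
    \<Rightarrow> real^'n^'n \<Rightarrow> nat \<Rightarrow> (nat \<Rightarrow> real^'m^'m) \<Rightarrow> nat \<Rightarrow> real^'n^'n" where
  "Pi_aux eps A B R F T Srho 0 = F"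
| "Pi_aux eps A B R F T Srho (Suc j) =
     Pi_step eps (A (T - Suc j)) (B (T - Suc j)) (R (T - Suc j)) (Srho (T - Suc j))
       (Pi_aux eps A B R F T Srho j)"

definition Pi_mat where
  "Pi_mat eps A B R F T Srho k = Pi_aux eps A B R F T Srho (T - k)"

definition SigmaQ where
  "SigmaQ eps A B R F T Srho k =
     eps *\<^sub>R matrix_inv (R k + transpose (B k) ** Pi_mat eps A B R F T Srho (Suc k) ** B k)"

definition Jcheck :: "real \<Rightarrow> (nat \<Rightarrow> real^'n^'n) \<Rightarrow> (nat \<Rightarrow> real^'m^'n) \<Rightarrow> (nat \<Rightarrow> real^'m^'m)
    \<Rightarrow> real^'n^'n \<Rightarrow> (nat \<Rightarrow> real^'n^'n) \<Rightarrow> real^'n^'n \<Rightarrow> nat \<Rightarrow> (nat \<Rightarrow> real^'m^'m) \<Rightarrow> real" where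
  "Jcheck eps A B R F Sw Sx T Srho =
     (1/2) * (trace (Pi_mat eps A B R F T Srho 0 ** Sx)
       + (\<Sum>k<T. eps * ln (det (Srho k + SigmaQ eps A B R F T Srho k)
                             / det (SigmaQ eps A B R F T Srho k))
                 + trace (Pi_mat eps A B R F T Srho (Suc k) ** Sw k)))"

end

theory Submission
  imports Defs
begin


definition diagm :: "('n \<Rightarrow> real) \<Rightarrow> real^'n^'n" where
  "diagm d = (\<chi> i j. if i = j then d i else 0)"

lemma dot_sym_mat:
  fixes M :: "real^'n^'n"
  assumes "transpose M = M"
  shows "x \<bullet> (M *v y) = (M *v x) \<bullet> y"
  by (metis assms dot_lmul_matrix transpose_matrix_vector)

lemma dot_transpose_mat:
  fixes M :: "real^'n^'m"
  shows "x \<bullet> (M *v y) = (transpose M *v x) \<bullet> y"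
  by (metis dot_lmul_matrix transpose_matrix_vector)

lemma quad_lin_zero:
  fixes a b :: real
  assumes "\<And>t. 0 \<le> t * a + t\<^sup>2 * b"
  shows "a = 0"
proof (rule ccontr)
  assume a: "a \<noteq> 0"
  define c where "c = \<bar>b\<bar> + 1"
  define t where "t = - a / c"
  have pos: "c > 0" "b < c" unfolding c_def by auto
  have "t * a + t\<^sup>2 * b = a\<^sup>2 * (b - c) / c\<^sup>2"
    unfolding t_def using pos by (simp add: field_simps power2_eq_square)
  also have "\<dots> < 0"
    using a pos by (intro divide_neg_pos mult_pos_neg) auto
  finally show False using assms[of t] by linarith
qed

lemma continuous_on_quadform:
  fixes M :: "real^'n^'n"
  shows "continuous_on S (\<lambda>x. x \<bullet> (M *v x))"
  by (intro continuous_intros)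

lemma mv_scale[simp]: "(M::real^'n^'m) *v (c *\<^sub>R v) = c *\<^sub>R (M *v v)"
  by (simp add: matrix_scaleR_vector_ac scaleR_matrix_vector_assoc)

lemma quad_expand:
  fixes M :: "real^'n^'n"
  assumes "transpose M = M"
  shows "(x + t *\<^sub>R h) \<bullet> (M *v (x + t *\<^sub>R h))
     = x \<bullet> (M *v x) + t * (2 * (h \<bullet> (M *v x))) + t\<^sup>2 * (h \<bullet> (M *v h))"
proof -
  have "x \<bullet> (M *v h) = h \<bullet> (M *v x)"
    using dot_sym_mat[OF assms, of x h] by (simp add: inner_commute)
  then show ?thesis
    by (simp add: matrix_vector_right_distrib matrix_scaleR_vector_ac[symmetric]
        scaleR_matrix_vector_assoc[symmetric] inner_add_left inner_add_right algebra_simps power2_eq_square)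
qed

lemma sym_eigvec_in:
  fixes M :: "real^'n^'n"
  assumes sym: "transpose M = M" and V: "subspace V"
    and inv: "\<And>x. x \<in> V \<Longrightarrow> M *v x \<in> V" and ne: "v \<in> V" "v \<noteq> 0"
  shows "\<exists>x\<in>V. norm x = 1 \<and> M *v x = (x \<bullet> (M *v x)) *\<^sub>R x"
proof -
  let ?K = "V \<inter> sphere 0 1"
  have "compact ?K"
    using V closed_subspace compact_sphere closed_Int_compact by blast
  moreover have "v /\<^sub>R norm v \<in> ?K"
    using ne V by (simp add: subspace_scale)
  then have "?K \<noteq> {}" by blast
  ultimately obtain x where x: "x \<in> ?K" and xmax: "\<And>y. y \<in> ?K \<Longrightarrow> y \<bullet> (M *v y) \<le> x \<bullet> (M *v x)"
    using continuous_attains_sup[of ?K "\<lambda>x. x \<bullet> (M *v x)"] continuous_on_quadform by blast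
  define l where "l = x \<bullet> (M *v x)"
  have xV: "x \<in> V" and nx: "norm x = 1" using x by auto
  have bound: "y \<bullet> (M *v y) \<le> l * (y \<bullet> y)" if yV: "y \<in> V" for y
  proof (cases "y = 0")
    case True then show ?thesis by simp
  next
    case False
    let ?z = "y /\<^sub>R norm y"
    have "?z \<in> ?K" using yV False V by (simp add: subspace_scale)
    then have "?z \<bullet> (M *v ?z) \<le> l" using xmax l_def by blast
    moreover have "?z \<bullet> (M *v ?z) = (y \<bullet> (M *v y)) / (norm y)\<^sup>2"
      by (simp add: power2_eq_square divide_inverse)
    moreover have "(norm y)\<^sup>2 > 0" using False by simp
    ultimately have "y \<bullet> (M *v y) \<le> l * (norm y)\<^sup>2"
      by (simp add: divide_le_eq)
    then show ?thesis by (simp add: power2_norm_eq_inner)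
  qed
  have orth: "h \<bullet> (M *v x - l *\<^sub>R x) = 0" if hV: "h \<in> V" for h
  proof -
    have "0 \<le> t * (2 * (l * (h \<bullet> x) - h \<bullet> (M *v x))) + t\<^sup>2 * (l * (h \<bullet> h) - h \<bullet> (M *v h))" for t
    proof -
      have "x + t *\<^sub>R h \<in> V" using V xV hV by (simp add: subspace_add subspace_scale)
      from bound[OF this] have "(x + t *\<^sub>R h) \<bullet> (M *v (x + t *\<^sub>R h)) \<le> l * ((x + t *\<^sub>R h) \<bullet> (x + t *\<^sub>R h))" .
      moreover have "(x + t *\<^sub>R h) \<bullet> (x + t *\<^sub>R h) = 1 + t * (2 * (h \<bullet> x)) + t\<^sup>2 * (h \<bullet> h)"
      proof -
        have xx: "x \<bullet> x = 1" using nx by (simp add: dot_square_norm)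
        show ?thesis by (simp add: inner_add_left inner_add_right inner_commute algebra_simps power2_eq_square xx)
      qed
      ultimately have "l + t * (2 * (h \<bullet> (M *v x))) + t\<^sup>2 * (h \<bullet> (M *v h))
          \<le> l * (1 + t * (2 * (h \<bullet> x)) + t\<^sup>2 * (h \<bullet> h))"
        by (simp only: quad_expand[OF sym] l_def[symmetric])
      then show ?thesis by (simp add: algebra_simps)
    qed
    then have "2 * (l * (h \<bullet> x) - h \<bullet> (M *v x)) = 0" by (rule quad_lin_zero)
    then show ?thesis by (simp add: inner_diff_right algebra_simps)
  qed
  have "M *v x - l *\<^sub>R x \<in> V" using V xV inv by (simp add: subspace_diff subspace_scale)
  from orth[OF this] have "M *v x - l *\<^sub>R x = 0" by simp
  then show ?thesis using xV nx l_def by auto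
qed

lemma spectral_family:
  fixes M :: "real^'n^'n"
  assumes sym: "transpose M = M"
  shows "\<exists>(\<phi>::'n \<Rightarrow> real^'n) d. (\<forall>i j. \<phi> i \<bullet> \<phi> j = (if i = j then 1 else 0)) \<and> (\<forall>j. M *v \<phi> j = d j *\<^sub>R \<phi> j)"
proof -
  have "\<exists>E. finite E \<and> card E = k \<and> (\<forall>e\<in>E. norm e = 1 \<and> M *v e = (e \<bullet> (M *v e)) *\<^sub>R e)
          \<and> (\<forall>e\<in>E. \<forall>f\<in>E. e \<noteq> f \<longrightarrow> e \<bullet> f = 0)" if "k \<le> CARD('n)" for k
    using that
  proof (induction k)
    case 0
    show ?case by (rule exI[of _ "{}"]) auto
  next
    case (Suc k)
    then obtain E where E: "finite E" "card E = k"
      and Eeig: "\<forall>e\<in>E. norm e = 1 \<and> M *v e = (e \<bullet> (M *v e)) *\<^sub>R e"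
      and Eorth: "\<forall>e\<in>E. \<forall>f\<in>E. e \<noteq> f \<longrightarrow> e \<bullet> f = 0" by auto
    define V where "V = {v. \<forall>e\<in>E. e \<bullet> v = 0}"
    have subV: "subspace V"
      unfolding V_def subspace_def by (auto simp: inner_add_right)
    have invV: "M *v v \<in> V" if "v \<in> V" for v
    proof -
      have "e \<bullet> (M *v v) = 0" if "e \<in> E" for e
      proof -
        have "e \<bullet> (M *v v) = (M *v e) \<bullet> v" by (rule dot_sym_mat[OF sym])
        also have "\<dots> = (e \<bullet> (M *v e)) * (e \<bullet> v)" using Eeig that by (metis inner_scaleR_left)
        also have "\<dots> = 0" using \<open>v \<in> V\<close> that unfolding V_def by simp
        finally show ?thesis .
      qed
      then show ?thesis unfolding V_def by simp
    qed
    have "dim E < DIM(real^'n)"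
      using dim_le_card'[OF E(1)] E(2) Suc.prems by simp
    then obtain x :: "real^'n" where x: "x \<noteq> 0" "\<And>y. y \<in> span E \<Longrightarrow> orthogonal x y"
      using orthogonal_to_subspace_exists by blast
    have "x \<in> V" unfolding V_def using x(2) span_base
      by (auto simp: orthogonal_def inner_commute)
    then obtain u where u: "u \<in> V" "norm u = 1" "M *v u = (u \<bullet> (M *v u)) *\<^sub>R u"
      using sym_eigvec_in[OF sym subV invV] x(1) by blast
    have uE: "u \<notin> E"
    proof
      assume "u \<in> E"
      then have "u \<bullet> u = 0" using u(1) unfolding V_def by auto
      then show False using u(2) by simp
    qed
    show ?case
    proof (rule exI[of _ "insert u E"], intro conjI)
      show "finite (insert u E)" using E by simp
      show "card (insert u E) = Suc k" using E uE by simp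
      show "\<forall>e\<in>insert u E. norm e = 1 \<and> M *v e = (e \<bullet> (M *v e)) *\<^sub>R e" using u Eeig by auto
      show "\<forall>e\<in>insert u E. \<forall>f\<in>insert u E. e \<noteq> f \<longrightarrow> e \<bullet> f = 0"
        using Eorth u(1) unfolding V_def by (auto simp: inner_commute)
    qed
  qed
  then obtain E where E: "finite E" "card E = CARD('n)"
      and Eeig: "\<forall>e\<in>E. norm e = 1 \<and> M *v e = (e \<bullet> (M *v e)) *\<^sub>R e"
      and Eorth: "\<forall>e\<in>E. \<forall>f\<in>E. e \<noteq> f \<longrightarrow> e \<bullet> f = 0" by blast
  obtain \<phi> :: "'n \<Rightarrow> real^'n" where bij: "bij_betw \<phi> UNIV E"
    using finite_same_card_bij[of "UNIV :: 'n set" E] E by auto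
  have "\<phi> i \<bullet> \<phi> j = (if i = j then 1 else 0)" for i j
  proof (cases "i = j")
    case True
    have "norm (\<phi> i) = 1" using bij Eeig by (auto simp: bij_betw_def)
    then show ?thesis using True by (simp add: dot_square_norm)
  next
    case False
    then have "\<phi> i \<noteq> \<phi> j" using bij by (auto simp: bij_betw_def inj_on_def)
    then show ?thesis using False bij Eorth by (auto simp: bij_betw_def)
  qed
  moreover have "M *v \<phi> j = (\<phi> j \<bullet> (M *v \<phi> j)) *\<^sub>R \<phi> j" for j
    using bij Eeig by (auto simp: bij_betw_def)
  ultimately show ?thesis
    by (intro exI[of _ \<phi>] exI[of _ "\<lambda>j. \<phi> j \<bullet> (M *v \<phi> j)"]) blast
qed



definition colmat :: "('n \<Rightarrow> real^'m) \<Rightarrow> real^'n^'m" where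
  "colmat \<phi> = (\<chi> i j. \<phi> j $ i)"

definition orthonormal_fam :: "('n \<Rightarrow> real^'n) \<Rightarrow> bool" where
  "orthonormal_fam \<phi> \<longleftrightarrow> (\<forall>i j. \<phi> i \<bullet> \<phi> j = (if i = j then 1 else 0))"

lemma mat_colmat: "((A::real^'m^'k) ** colmat \<phi>) $ i $ j = (A *v \<phi> j) $ i"
  by (simp add: matrix_matrix_mult_def matrix_vector_mult_def colmat_def)

lemma colmat_orth1:
  assumes "orthonormal_fam \<phi>"
  shows "transpose (colmat \<phi>) ** colmat \<phi> = mat 1"
  using assms
  by (simp add: vec_eq_iff matrix_matrix_mult_def colmat_def transpose_def mat_def
      orthonormal_fam_def inner_vec_def)

lemma colmat_orth2:
  assumes "orthonormal_fam \<phi>"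
  shows "colmat \<phi> ** transpose (colmat \<phi>) = mat 1"
  using colmat_orth1[OF assms] matrix_left_right_inverse by blast

lemma mat_eq_on_fam:
  fixes A B :: "real^'n^'k"
  assumes "orthonormal_fam \<phi>" "\<And>j. A *v \<phi> j = B *v \<phi> j"
  shows "A = B"
proof -
  have "A ** colmat \<phi> = B ** colmat \<phi>"
    using assms(2) by (simp add: vec_eq_iff mat_colmat)
  then have "A ** colmat \<phi> ** transpose (colmat \<phi>) = B ** colmat \<phi> ** transpose (colmat \<phi>)" by simp
  then show ?thesis by (simp add: matrix_mul_assoc[symmetric] colmat_orth2[OF assms(1)])
qed

lemma diagm_mult: "diagm a ** diagm b = diagm (\<lambda>i. a i * b i)"
  by (simp add: vec_eq_iff matrix_matrix_mult_def diagm_def if_distrib[of "\<lambda>x. x * _"] sum.delta cong: if_cong)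

lemma transpose_diagm[simp]: "transpose (diagm d) = diagm d"
  by (simp add: vec_eq_iff transpose_def diagm_def)

lemma colmat_eig:
  assumes "\<And>j. M *v \<phi> j = d j *\<^sub>R \<phi> j"
  shows "M ** colmat \<phi> = colmat \<phi> ** diagm d"
  using assms
  by (simp add: vec_eq_iff mat_colmat) (simp add: matrix_matrix_mult_def colmat_def diagm_def
      if_distrib[of "\<lambda>x. _ * x"] sum.delta cong: if_cong)

lemma spectral_mat:
  fixes M :: "real^'n^'n"
  assumes "transpose M = M"
  shows "\<exists>\<phi> d. orthonormal_fam \<phi> \<and> (\<forall>j. M *v \<phi> j = d j *\<^sub>R \<phi> j)
     \<and> M = colmat \<phi> ** diagm d ** transpose (colmat \<phi>)"
proof -
  obtain \<phi> :: "'n \<Rightarrow> real^'n" and d where o: "orthonormal_fam \<phi>" and e: "\<And>j. M *v \<phi> j = d j *\<^sub>R \<phi> j"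
    using spectral_family[OF assms] unfolding orthonormal_fam_def by blast
  have "M = M ** colmat \<phi> ** transpose (colmat \<phi>)"
    by (simp add: matrix_mul_assoc[symmetric] colmat_orth2[OF o])
  also have "\<dots> = colmat \<phi> ** diagm d ** transpose (colmat \<phi>)"
    by (simp add: colmat_eig[OF e])
  finally show ?thesis using o e by blast
qed

lemma psd_conj:
  fixes N :: "real^'n^'n" and A :: "real^'m^'n"
  assumes "psd_mat N"
  shows "psd_mat (transpose A ** N ** A)"
  unfolding psd_mat_def
proof (intro conjI allI)
  show "transpose (transpose A ** N ** A) = transpose A ** N ** A"
    using assms by (simp add: psd_mat_def matrix_transpose_mul matrix_mul_assoc)
  fix x
  have "x \<bullet> ((transpose A ** N ** A) *v x) = (A *v x) \<bullet> (N *v (A *v x))"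
  proof -
    have "x \<bullet> ((transpose A ** N ** A) *v x) = x \<bullet> (transpose A *v (N *v (A *v x)))"
      by (simp only: matrix_vector_mul_assoc matrix_mul_assoc)
    also have "\<dots> = (A *v x) \<bullet> (N *v (A *v x))"
      by (metis dot_transpose_mat transpose_transpose)
    finally show ?thesis .
  qed
  then show "0 \<le> x \<bullet> ((transpose A ** N ** A) *v x)"
    using assms by (simp add: psd_mat_def)
qed

lemma quad_diagm: "x \<bullet> (diagm d *v x) = (\<Sum>i\<in>UNIV. d i * (x $ i)\<^sup>2)"
  by (simp add: inner_vec_def matrix_vector_mult_def diagm_def if_distrib[of "\<lambda>x. x * _"]
      if_distrib[of "\<lambda>y. _ * y"] sum.delta power2_eq_square algebra_simps cong: if_cong)

lemma psd_diagm:
  assumes "\<And>i. d i \<ge> 0"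
  shows "psd_mat (diagm d)"
  unfolding psd_mat_def quad_diagm using assms by (auto intro: sum_nonneg)

lemma psd_diag_nonneg:
  assumes "psd_mat N"
  shows "N $ i $ i \<ge> 0"
proof -
  have "axis i 1 \<bullet> (N *v axis i 1) = N $ i $ i"
    by (simp add: inner_vec_def matrix_vector_mult_def axis_def if_distrib[of "\<lambda>x. _ * x"]
      if_distrib[of "\<lambda>x. x * _"] sum.delta cong: if_cong)
  then show ?thesis using assms unfolding psd_mat_def by metis
qed



lemma mm_add_right: "(A + B) ** (C::real^'k^'n) = A ** C + B ** (C::real^'k^'n)"
  by (simp add: vec_eq_iff matrix_matrix_mult_def sum.distrib distrib_right)
lemma mm_add_left: "(C::real^'n^'m) ** (A + B) = C ** A + C ** B"
  by (simp add: matrix_add_ldistrib)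
lemma mm_diff_right: "(A - B) ** (C::real^'k^'n) = A ** C - B ** (C::real^'k^'n)"
  by (simp add: vec_eq_iff matrix_matrix_mult_def sum_subtractf left_diff_distrib)
lemma mm_diff_left: "(C::real^'n^'m) ** (A - B) = C ** A - C ** B"
  by (simp add: vec_eq_iff matrix_matrix_mult_def sum_subtractf right_diff_distrib)
lemma transpose_add: "transpose ((A::real^'n^'m) + B) = transpose A + transpose B"
  by (simp add: vec_eq_iff transpose_def)
lemma transpose_diff: "transpose ((A::real^'n^'m) - B) = transpose A - transpose B"
  by (simp add: vec_eq_iff transpose_def)

lemma psd_eigval_nonneg:
  assumes "psd_mat M" "orthonormal_fam \<phi>" "M *v \<phi> j = d j *\<^sub>R \<phi> j"
  shows "d j \<ge> 0"
proof -
  have "\<phi> j \<bullet> (M *v \<phi> j) = d j"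
    using assms(2,3) by (simp add: orthonormal_fam_def)
  then show ?thesis using assms(1) unfolding psd_mat_def by metis
qed

lemma psd_sym: "psd_mat M \<Longrightarrow> transpose M = M"
  by (simp add: psd_mat_def)

lemma sqrt_exists:
  fixes M :: "real^'n^'n"
  assumes "psd_mat M"
  shows "\<exists>L. psd_mat L \<and> L ** L = M"
proof -
  obtain \<phi> d where o: "orthonormal_fam \<phi>" and e: "\<forall>j. M *v \<phi> j = d j *\<^sub>R \<phi> j"
    and M: "M = colmat \<phi> ** diagm d ** transpose (colmat \<phi>)"
    using spectral_mat[OF psd_sym[OF assms]] by blast
  have d0: "d j \<ge> 0" for j using psd_eigval_nonneg[OF assms o] e by blast
  define L where "L = colmat \<phi> ** diagm (\<lambda>j. sqrt (d j)) ** transpose (colmat \<phi>)"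
  have "psd_mat L"
    unfolding L_def using psd_conj[OF psd_diagm, of "\<lambda>j. sqrt (d j)" "transpose (colmat \<phi>)"] d0
    by simp
  moreover have "L ** L = M"
  proof -
    have "L ** L = colmat \<phi> ** diagm (\<lambda>j. sqrt (d j)) ** (transpose (colmat \<phi>) ** colmat \<phi>) **
        diagm (\<lambda>j. sqrt (d j)) ** transpose (colmat \<phi>)"
      unfolding L_def by (simp add: matrix_mul_assoc)
    also have "\<dots> = colmat \<phi> ** (diagm (\<lambda>j. sqrt (d j)) ** diagm (\<lambda>j. sqrt (d j))) ** transpose (colmat \<phi>)"
      by (simp add: colmat_orth1[OF o] matrix_mul_assoc)
    also have "\<dots> = M"
      unfolding diagm_mult M using d0 by (simp add: real_sqrt_mult[symmetric])
    finally show ?thesis .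
  qed
  ultimately show ?thesis by blast
qed

lemma psd_quad_zero:
  assumes "psd_mat S" "v \<bullet> (S *v v) = 0"
  shows "S *v v = 0"
proof -
  have "0 \<le> t * (2 * ((S *v v) \<bullet> (S *v v))) + t\<^sup>2 * ((S *v v) \<bullet> (S *v (S *v v)))" for t
    using assms quad_expand[OF psd_sym[OF assms(1)], of v t "S *v v"]
    unfolding psd_mat_def by (metis add_0)
  from quad_lin_zero[OF this] show ?thesis by simp
qed

lemma sqrt_unique:
  fixes S S' :: "real^'n^'n"
  assumes S: "psd_mat S" and S': "psd_mat S'" and eq: "S ** S = S' ** S'"
  shows "S = S'"
proof -
  define D where "D = S - S'"
  have symD: "transpose D = D" using S S' by (simp add: D_def transpose_diff psd_sym)
  obtain \<phi> \<mu> where o: "orthonormal_fam \<phi>" and e: "\<forall>j. D *v \<phi> j = \<mu> j *\<^sub>R \<phi> j"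
    using spectral_mat[OF symD] by blast
  have Z: "S ** D + D ** S' = 0"
    unfolding D_def by (simp add: mm_diff_left mm_diff_right eq)
  have Dz: "D *v \<phi> j = mat 0 *v \<phi> j" for j
  proof -
    let ?v = "\<phi> j"
    have vv: "?v \<bullet> ?v = 1" using o by (simp add: orthonormal_fam_def)
    have "0 = ?v \<bullet> ((S ** D + D ** S') *v ?v)" by (simp add: Z)
    also have "\<dots> = ?v \<bullet> (S *v (D *v ?v)) + ?v \<bullet> (D *v (S' *v ?v))"
      by (simp add: matrix_vector_mult_add_rdistrib matrix_vector_mul_assoc inner_add_right)
    also have "?v \<bullet> (D *v (S' *v ?v)) = (D *v ?v) \<bullet> (S' *v ?v)"
      by (rule dot_sym_mat[OF symD])
    finally have "0 = ?v \<bullet> (S *v (D *v ?v)) + (D *v ?v) \<bullet> (S' *v ?v)" .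
    moreover have ej: "D *v ?v = \<mu> j *\<^sub>R ?v" using e by blast
    ultimately have "0 = \<mu> j * (?v \<bullet> (S *v ?v) + ?v \<bullet> (S' *v ?v))"
      by (simp add: distrib_left)
    moreover have "?v \<bullet> (S *v ?v) \<ge> 0" "?v \<bullet> (S' *v ?v) \<ge> 0"
      using S S' unfolding psd_mat_def by auto
    ultimately have "\<mu> j = 0 \<or> (?v \<bullet> (S *v ?v) = 0 \<and> ?v \<bullet> (S' *v ?v) = 0)"
      by (smt (verit) mult_eq_0_iff)
    then have "\<mu> j = 0"
    proof
      assume "?v \<bullet> (S *v ?v) = 0 \<and> ?v \<bullet> (S' *v ?v) = 0"
      then have "S *v ?v = 0" "S' *v ?v = 0" using psd_quad_zero S S' by blast+
      then have "D *v ?v = 0" by (simp add: D_def matrix_vector_mult_diff_rdistrib)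
      then have "\<mu> j *\<^sub>R ?v = 0" using e by simp
      then show "\<mu> j = 0" using vv by auto
    qed
    then show ?thesis using e by simp
  qed
  have "D = mat 0" by (rule mat_eq_on_fam[OF o Dz])
  then show ?thesis by (simp add: D_def)
qed

lemma msqrt_props:
  assumes "psd_mat M"
  shows "psd_mat (msqrt M) \<and> msqrt M ** msqrt M = M"
proof -
  have "\<exists>!L. psd_mat L \<and> L ** L = M"
    using sqrt_exists[OF assms] sqrt_unique by blast
  then show ?thesis unfolding msqrt_def by (rule theI')
qed



lemma matrix_inv_props:
  assumes "invertible (A::real^'n^'n)"
  shows "A ** matrix_inv A = mat 1" "matrix_inv A ** A = mat 1"
proof -
  have "\<exists>A'. A ** A' = mat 1 \<and> A' ** A = mat 1" using assms unfolding invertible_def .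
  then have "A ** matrix_inv A = mat 1 \<and> matrix_inv A ** A = mat 1"
    unfolding matrix_inv_def by (rule someI_ex)
  then show "A ** matrix_inv A = mat 1" "matrix_inv A ** A = mat 1" by auto
qed

lemma inj_invertible:
  fixes M :: "real^'n^'n"
  assumes "\<And>x. M *v x = 0 \<Longrightarrow> x = 0"
  shows "invertible M"
proof -
  have "inj ((*v) M)" using assms vec.inj_iff_eq_0 by blast
  then obtain B where "B ** M = mat 1" using matrix_left_invertible_injective by blast
  then show ?thesis unfolding invertible_def using matrix_left_right_inverse by blast
qed

lemma pd_invertible:
  fixes M :: "real^'n^'n"
  assumes "\<And>x. x \<noteq> 0 \<Longrightarrow> 0 < x \<bullet> (M *v x)"
  shows "invertible M"
  by (rule inj_invertible) (metis assms inner_zero_right less_irrefl)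

lemma prod_one_plus_ge:
  fixes d :: "'a \<Rightarrow> real"
  assumes "finite I" "\<And>i. i \<in> I \<Longrightarrow> d i \<ge> 0"
  shows "(\<Prod>i\<in>I. 1 + d i) \<ge> 1 + (\<Sum>i\<in>I. d i)"
  using assms
proof (induction I rule: finite_induct)
  case empty then show ?case by simp
next
  case (insert a F)
  have da: "d a \<ge> 0" using insert by auto
  have sF: "(\<Sum>i\<in>F. d i) \<ge> 0" using insert by (auto intro: sum_nonneg)
  have IH: "(\<Prod>i\<in>F. 1 + d i) \<ge> 1 + (\<Sum>i\<in>F. d i)" using insert by auto
  have "(\<Prod>i\<in>insert a F. 1 + d i) = (1 + d a) * (\<Prod>i\<in>F. 1 + d i)" using insert by simp
  also have "\<dots> \<ge> (1 + d a) * (1 + (\<Sum>i\<in>F. d i))"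
    using IH da by (intro mult_left_mono) auto
  finally have "(\<Prod>i\<in>insert a F. 1 + d i) \<ge> (1 + d a) * (1 + (\<Sum>i\<in>F. d i))" .
  moreover have "(1 + d a) * (1 + (\<Sum>i\<in>F. d i)) \<ge> 1 + (d a + (\<Sum>i\<in>F. d i))"
    using da sF by (simp add: algebra_simps)
  ultimately show ?case using insert by simp
qed

lemma det_diagm: "det (diagm d) = (\<Prod>i\<in>UNIV. d i)"
  by (subst det_diagonal) (auto simp: diagm_def)

lemma trace_diagm: "trace (diagm d) = (\<Sum>i\<in>UNIV. d i)"
  by (simp add: trace_def diagm_def)

lemma det_conj_orth:
  assumes "orthonormal_fam \<phi>"
  shows "det (colmat \<phi> ** X ** transpose (colmat \<phi>)) = det X"
proof -
  have "det (colmat \<phi> ** X ** transpose (colmat \<phi>)) = det X * (det (colmat \<phi>) * det (transpose (colmat \<phi>)))"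
    by (simp add: det_mul)
  also have "det (colmat \<phi>) * det (transpose (colmat \<phi>)) = 1"
    using colmat_orth2[OF assms] det_mul[of "colmat \<phi>" "transpose (colmat \<phi>)"] by simp
  finally show ?thesis by simp
qed

lemma trace_conj_orth:
  assumes "orthonormal_fam \<phi>"
  shows "trace (colmat \<phi> ** X ** transpose (colmat \<phi>)) = trace X"
proof -
  have "trace (colmat \<phi> ** X ** transpose (colmat \<phi>)) = trace (transpose (colmat \<phi>) ** (colmat \<phi> ** X))"
    by (rule trace_mul_sym)
  also have "\<dots> = trace X" by (simp add: matrix_mul_assoc colmat_orth1[OF assms])
  finally show ?thesis .
qed

lemma det_I_plus_psd:
  fixes N :: "real^'n^'n"
  assumes "psd_mat N"
  shows "det (mat 1 + N) \<ge> 1 + trace N"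
proof -
  obtain \<phi> d where o: "orthonormal_fam \<phi>" and e: "\<forall>j. N *v \<phi> j = d j *\<^sub>R \<phi> j"
    and Nd: "N = colmat \<phi> ** diagm d ** transpose (colmat \<phi>)"
    using spectral_mat[OF psd_sym[OF assms]] by blast
  have d0: "d j \<ge> 0" for j using psd_eigval_nonneg[OF assms o] e by blast
  have "mat 1 + N = colmat \<phi> ** (mat 1 + diagm d) ** transpose (colmat \<phi>)"
    unfolding Nd by (simp add: mm_add_left mm_add_right colmat_orth2[OF o])
  also have "mat 1 + diagm d = diagm (\<lambda>i. 1 + d i)"
    by (simp add: vec_eq_iff diagm_def mat_def)
  finally have "det (mat 1 + N) = (\<Prod>i\<in>UNIV. 1 + d i)"
    by (simp add: det_conj_orth[OF o] det_diagm)
  moreover have "trace N = (\<Sum>i\<in>UNIV. d i)"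
    unfolding Nd by (simp add: trace_conj_orth[OF o] trace_diagm)
  ultimately show ?thesis using prod_one_plus_ge[of UNIV d] d0 by simp
qed

lemma trace_psd_nonneg: "psd_mat N \<Longrightarrow> trace N \<ge> 0"
  unfolding trace_def by (intro sum_nonneg psd_diag_nonneg)

lemma trace_psd_mult:
  fixes P Q :: "real^'n^'n"
  assumes "psd_mat P" "psd_mat Q"
  shows "trace (P ** Q) \<ge> 0"
proof -
  obtain L where L: "psd_mat L" "L ** L = Q" using sqrt_exists[OF assms(2)] by blast
  have "trace (P ** Q) = trace (L ** (P ** L))"
    by (metis L(2) matrix_mul_assoc trace_mul_sym)
  also have "\<dots> = trace (transpose L ** P ** L)"
    using psd_sym[OF L(1)] by (simp add: matrix_mul_assoc)
  finally show ?thesis using trace_psd_nonneg[OF psd_conj[OF assms(1)]] by simp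
qed

lemma axis_quad: "axis i 1 \<bullet> ((S::real^'n^'n) *v axis j 1) = S $ i $ j"
  by (simp add: inner_vec_def matrix_vector_mult_def axis_def if_distrib[of "\<lambda>x. _ * x"]
      if_distrib[of "\<lambda>x. x * _"] sum.delta cong: if_cong)

lemma psd_entry_le_trace:
  fixes S :: "real^'n^'n"
  assumes "psd_mat S"
  shows "\<bar>S $ i $ j\<bar> \<le> trace S"
proof (cases "i = j")
  case True
  have "S $ i $ i \<le> (\<Sum>k\<in>UNIV. S $ k $ k)"
    by (rule member_le_sum) (auto intro: psd_diag_nonneg[OF assms])
  then show ?thesis using True psd_diag_nonneg[OF assms, of i] by (simp add: trace_def)
next
  case False
  have sym: "S $ j $ i = S $ i $ j"
    using psd_sym[OF assms] by (metis transpose_def vec_lambda_beta)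
  let ?a = "axis i (1::real)" and ?b = "axis j (1::real)"
  have q: "(?a + c *\<^sub>R ?b) \<bullet> (S *v (?a + c *\<^sub>R ?b)) = S$i$i + 2 * c * S$i$j + c\<^sup>2 * S$j$j" for c
    unfolding quad_expand[OF psd_sym[OF assms]] axis_quad sym by (simp add: algebra_simps)
  have "0 \<le> S$i$i + 2 * c * S$i$j + c\<^sup>2 * S$j$j" for c
    using assms q unfolding psd_mat_def by metis
  from this[of 1] this[of "-1"] have "\<bar>S$i$j\<bar> \<le> (S$i$i + S$j$j) / 2" by (simp add: abs_le_iff)
  also have "S$i$i + S$j$j = (\<Sum>k\<in>{i,j}. S $ k $ k)" using False by simp
  also have "\<dots> \<le> (\<Sum>k\<in>UNIV. S $ k $ k)"
    by (rule sum_mono2) (auto intro: psd_diag_nonneg[OF assms])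
  finally show ?thesis using trace_psd_nonneg[OF assms] by (simp add: trace_def)
qed

lemma norm_mat_le_entries: "norm (S::real^'n^'m) \<le> (\<Sum>i\<in>UNIV. \<Sum>j\<in>UNIV. \<bar>S $ i $ j\<bar>)"
proof -
  have "norm S \<le> (\<Sum>i\<in>UNIV. norm (S $ i))"
    unfolding norm_vec_def by (rule L2_set_le_sum) auto
  also have "\<dots> \<le> (\<Sum>i\<in>UNIV. \<Sum>j\<in>UNIV. \<bar>S $ i $ j\<bar>)"
    by (intro sum_mono norm_le_l1_cart)
  finally show ?thesis .
qed

lemma psd_norm_le_trace:
  fixes S :: "real^'n^'n"
  assumes "psd_mat S"
  shows "norm S \<le> real CARD('n) * real CARD('n) * trace S"
proof -
  have "norm S \<le> (\<Sum>i\<in>UNIV. \<Sum>j\<in>UNIV. \<bar>S $ i $ j\<bar>)" by (rule norm_mat_le_entries)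
  also have "\<dots> \<le> (\<Sum>i\<in>(UNIV::'n set). \<Sum>j\<in>(UNIV::'n set). trace S)"
    by (intro sum_mono psd_entry_le_trace[OF assms])
  finally show ?thesis by (simp add: algebra_simps)
qed

lemma pd_lower:
  fixes R :: "real^'n^'n"
  assumes "pd_mat R"
  shows "\<exists>r>0. \<forall>x. r * (x \<bullet> x) \<le> x \<bullet> (R *v x)"
proof -
  obtain i :: 'n where True by blast
  have "axis i (1::real) \<in> sphere 0 1" by simp
  then have ne: "sphere (0::real^'n) 1 \<noteq> {}" by blast
  obtain x0 where x0: "x0 \<in> sphere 0 1" and mn: "\<And>y. y \<in> sphere 0 1 \<Longrightarrow> x0 \<bullet> (R *v x0) \<le> y \<bullet> (R *v y)"
    using continuous_attains_inf[OF compact_sphere ne continuous_on_quadform[of _ R]] by blast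
  define r where "r = x0 \<bullet> (R *v x0)"
  have "x0 \<noteq> 0" using x0 by auto
  then have rpos: "r > 0" using assms unfolding pd_mat_def r_def by blast
  have "r * (x \<bullet> x) \<le> x \<bullet> (R *v x)" for x
  proof (cases "x = 0")
    case True then show ?thesis by simp
  next
    case False
    have "x /\<^sub>R norm x \<in> sphere 0 1" using False by simp
    from mn[OF this] have "r \<le> (x \<bullet> (R *v x)) / (norm x)\<^sup>2"
      by (simp add: r_def power2_eq_square divide_inverse mult.commute mult.left_commute)
    moreover have "(norm x)\<^sup>2 > 0" using False by simp
    ultimately show ?thesis by (simp add: le_divide_eq power2_norm_eq_inner)
  qed
  then show ?thesis using rpos by blast
qed



lemma mat_tendstoI:
  fixes f :: "'a \<Rightarrow> real^'n^'m"
  assumes "\<And>i j. ((\<lambda>x. f x $ i $ j) \<longlongrightarrow> L $ i $ j) F"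
  shows "(f \<longlongrightarrow> L) F"
  by (intro vec_tendstoI assms)

lemma mat_tendstoD:
  fixes f :: "'a \<Rightarrow> real^'n^'m"
  assumes "(f \<longlongrightarrow> L) F"
  shows "((\<lambda>x. f x $ i $ j) \<longlongrightarrow> L $ i $ j) F"
  by (intro tendsto_vec_nth assms)

lemma tendsto_mm:
  fixes f :: "'a \<Rightarrow> real^'n^'m" and g :: "'a \<Rightarrow> real^'k^'n"
  assumes "(f \<longlongrightarrow> A) F" "(g \<longlongrightarrow> B) F"
  shows "((\<lambda>x. f x ** g x) \<longlongrightarrow> A ** B) F"
  unfolding matrix_matrix_mult_def
  by (intro mat_tendstoI) (simp, intro tendsto_sum tendsto_mult mat_tendstoD assms)

lemma tendsto_transpose:
  fixes f :: "'a \<Rightarrow> real^'n^'m"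
  assumes "(f \<longlongrightarrow> A) F"
  shows "((\<lambda>x. transpose (f x)) \<longlongrightarrow> transpose A) F"
  unfolding transpose_def
  by (intro mat_tendstoI) (simp, intro mat_tendstoD assms)

lemma tendsto_det:
  fixes f :: "'a \<Rightarrow> real^'n^'n"
  assumes "(f \<longlongrightarrow> A) F"
  shows "((\<lambda>x. det (f x)) \<longlongrightarrow> det A) F"
  unfolding det_def
  by (intro tendsto_sum tendsto_mult tendsto_const tendsto_prod mat_tendstoD assms)

lemma tendsto_trace:
  fixes f :: "'a \<Rightarrow> real^'n^'n"
  assumes "(f \<longlongrightarrow> A) F"
  shows "((\<lambda>x. trace (f x)) \<longlongrightarrow> trace A) F"
  unfolding trace_def
  by (intro tendsto_sum mat_tendstoD assms)

definition cram :: "real^'n^'n \<Rightarrow> real^'n^'n" where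
  "cram M = (\<chi> k j. det (\<chi> i l. if l = k then axis j 1 $ i else M $ i $ l) / det M)"

lemma matrix_inv_cram:
  fixes M :: "real^'n^'n"
  assumes "det M \<noteq> 0"
  shows "matrix_inv M = cram M"
proof -
  have inv: "invertible M" using assms invertible_det_nz by blast
  have MM: "M ** matrix_inv M = mat 1"
  proof -
    have "\<exists>A'. M ** A' = mat 1 \<and> A' ** M = mat 1" using inv unfolding invertible_def .
    then have "M ** matrix_inv M = mat 1 \<and> matrix_inv M ** M = mat 1"
      unfolding matrix_inv_def by (rule someI_ex)
    then show ?thesis by simp
  qed
  have "matrix_inv M $ k $ j = cram M $ k $ j" for k j
  proof -
    let ?x = "matrix_inv M *v axis j 1"
    have "M *v ?x = axis j 1" by (simp add: matrix_vector_mul_assoc MM)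
    then have "?x = (\<chi> k. det (\<chi> i l. if l = k then axis j 1 $ i else M $ i $ l) / det M)"
      using cramer[OF assms] by blast
    then have "?x $ k = cram M $ k $ j" by (simp add: cram_def)
    moreover have "?x $ k = matrix_inv M $ k $ j"
      by (simp add: matrix_vector_mult_def axis_def if_distrib[of "\<lambda>x. _ * x"] sum.delta cong: if_cong)
    ultimately show ?thesis by simp
  qed
  then show ?thesis by (simp add: vec_eq_iff)
qed

lemma tendsto_matrix_inv:
  fixes f :: "'a \<Rightarrow> real^'n^'n"
  assumes f: "(f \<longlongrightarrow> A) F" and A: "det A \<noteq> 0"
  shows "((\<lambda>x. matrix_inv (f x)) \<longlongrightarrow> matrix_inv A) F"
proof -
  have ev: "eventually (\<lambda>x. det (f x) \<noteq> 0) F"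
    using tendsto_imp_eventually_ne[OF tendsto_det[OF f] A] .
  have "((\<lambda>x. cram (f x)) \<longlongrightarrow> cram A) F"
  proof (rule mat_tendstoI)
    fix k j
    have "((\<lambda>x. (\<chi> i l. if l = k then axis j 1 $ i else f x $ i $ l) :: real^'n^'n)
          \<longlongrightarrow> (\<chi> i l. if l = k then axis j 1 $ i else A $ i $ l)) F"
    proof (rule mat_tendstoI)
      fix i l
      show "((\<lambda>x. (\<chi> i l. if l = k then axis j 1 $ i else f x $ i $ l) $ i $ l :: real)
          \<longlongrightarrow> (\<chi> i l. if l = k then axis j 1 $ i else A $ i $ l) $ i $ l) F"
        by (cases "l = k") (simp_all add: mat_tendstoD[OF f])
    qed
    note D = tendsto_det[OF this]
    show "((\<lambda>x. cram (f x) $ k $ j) \<longlongrightarrow> cram A $ k $ j) F"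
      unfolding cram_def using tendsto_divide[OF D tendsto_det[OF f] A] by simp
  qed
  then have "((\<lambda>x. cram (f x)) \<longlongrightarrow> matrix_inv A) F" using matrix_inv_cram[OF A] by simp
  then show ?thesis
  proof (rule Lim_transform_eventually)
    show "\<forall>\<^sub>F x in F. cram (f x) = matrix_inv (f x)"
      using ev by eventually_elim (simp add: matrix_inv_cram)
  qed
qed



lemma matrix_inv_unique:
  fixes A B :: "real^'n^'n"
  assumes "A ** B = mat 1"
  shows "matrix_inv A = B"
proof -
  have "B ** A = mat 1" using assms matrix_left_right_inverse by blast
  then have inv: "invertible A" using assms unfolding invertible_def by blast
  have "matrix_inv A = matrix_inv A ** (A ** B)" using assms by simp
  also have "\<dots> = B" by (simp add: matrix_mul_assoc matrix_inv_props(2)[OF inv])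
  finally show ?thesis .
qed

lemma transpose_matrix_inv:
  fixes A :: "real^'n^'n"
  assumes "invertible A"
  shows "transpose (matrix_inv A) = matrix_inv (transpose A)"
proof -
  have "transpose A ** transpose (matrix_inv A) = mat 1"
    using matrix_inv_props(2)[OF assms] by (metis matrix_transpose_mul transpose_mat)
  then show ?thesis using matrix_inv_unique by metis
qed

lemma invertible_I_plus_SC:
  fixes S C :: "real^'n^'n"
  assumes S: "psd_mat S" and Csym: "transpose C = C" and Cpd: "\<And>x. x \<noteq> 0 \<Longrightarrow> 0 < x \<bullet> (C *v x)"
  shows "invertible (mat 1 + S ** C)"
proof (rule inj_invertible)
  fix v assume "(mat 1 + S ** C) *v v = 0"
  then have v: "v = - (S *v (C *v v))"
    by (simp add: matrix_vector_mult_add_rdistrib matrix_vector_mul_assoc eq_neg_iff_add_eq_0)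
  have "v \<bullet> (C *v v) = (C *v v) \<bullet> v" by (simp add: inner_commute)
  also have "\<dots> = - ((C *v v) \<bullet> (S *v (C *v v)))" by (subst (2) v) simp
  finally have "v \<bullet> (C *v v) \<le> 0" using S unfolding psd_mat_def by (metis neg_le_0_iff_le)
  then show "v = 0" using Cpd by force
qed

definition Cmat_pd where
  "Cmat_pd C \<longleftrightarrow> transpose C = C \<and> (\<forall>x. x \<noteq> 0 \<longrightarrow> 0 < x \<bullet> (C *v x))"

lemma push_through:
  fixes L C :: "real^'n^'n"
  assumes L: "psd_mat L" and C: "Cmat_pd C"
  shows "L ** matrix_inv (mat 1 + L ** C ** L) ** L = matrix_inv (mat 1 + (L ** L) ** C) ** (L ** L)"
    and "invertible (mat 1 + L ** C ** L)"
proof -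
  have Lsym: "transpose L = L" using psd_sym[OF L] .
  have C': "transpose C = C" "\<And>x. x \<noteq> 0 \<Longrightarrow> 0 < x \<bullet> (C *v x)" using C by (auto simp: Cmat_pd_def)
  let ?X = "mat 1 + L ** C ** L"
  show invX: "invertible ?X"
  proof (rule inj_invertible)
    fix v assume "?X *v v = 0"
    then have "v \<bullet> (?X *v v) = 0" by simp
    moreover have "v \<bullet> (?X *v v) = v \<bullet> v + (L *v v) \<bullet> (C *v (L *v v))"
      by (simp add: matrix_vector_mult_add_rdistrib inner_add_right matrix_vector_mul_assoc[symmetric]
          dot_sym_mat[OF Lsym])
    moreover have "(L *v v) \<bullet> (C *v (L *v v)) \<ge> 0"
      using C'(2) by (cases "L *v v = 0") (auto intro: less_imp_le)
    ultimately show "v = 0" by (metis add_nonneg_eq_0_iff inner_eq_zero_iff inner_ge_zero)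
  qed
  have "psd_mat (mat 1 :: real^'n^'n)" by (simp add: psd_mat_def)
  from psd_conj[OF this, of L] have SLL: "psd_mat (L ** L)" using Lsym by simp
  let ?Y = "mat 1 + (L ** L) ** C"
  have invY: "invertible ?Y" using invertible_I_plus_SC[OF SLL C'] .
  have YL: "?Y ** L = L ** ?X"
    by (simp add: mm_add_left mm_add_right matrix_mul_assoc)
  have "?Y ** (L ** matrix_inv ?X ** L) = L ** L"
  proof -
    have "?Y ** (L ** matrix_inv ?X ** L) = (?Y ** L) ** matrix_inv ?X ** L" by (simp add: matrix_mul_assoc)
    also have "\<dots> = L ** (?X ** matrix_inv ?X) ** L" by (simp add: YL matrix_mul_assoc)
    also have "\<dots> = L ** L" by (simp add: matrix_inv_props(1)[OF invX])
    finally show ?thesis .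
  qed
  then have "matrix_inv ?Y ** (?Y ** (L ** matrix_inv ?X ** L)) = matrix_inv ?Y ** (L ** L)" by simp
  then show "L ** matrix_inv ?X ** L = matrix_inv ?Y ** (L ** L)"
    by (simp add: matrix_mul_assoc matrix_inv_props(2)[OF invY])
qed

definition Gm :: "real^'m^'m \<Rightarrow> real^'m^'m \<Rightarrow> real^'m^'m" where
  "Gm C S = matrix_inv (mat 1 + S ** C) ** S"

definition Pi_step2 :: "real \<Rightarrow> real^'n^'n \<Rightarrow> real^'m^'n \<Rightarrow> real^'m^'m \<Rightarrow> real^'m^'m
    \<Rightarrow> real^'n^'n \<Rightarrow> real^'n^'n" where
  "Pi_step2 eps Ak Bk Rk S P =
     transpose Ak ** P ** Ak
     - (1/eps) *\<^sub>R (transpose Ak ** P ** Bk ** Gm (Cmat eps Rk Bk P) S ** transpose Bk ** P ** Ak)"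

lemma Cmat_pd_lemma:
  assumes eps: "eps > 0" and R: "pd_mat R" and P: "psd_mat P"
  shows "Cmat_pd (Cmat eps R B P)"
  unfolding Cmat_pd_def
proof (intro conjI allI impI)
  show "transpose (Cmat eps R B P) = Cmat eps R B P"
    using R P by (simp add: Cmat_def transpose_scalar transpose_add matrix_transpose_mul
        matrix_mul_assoc pd_mat_def psd_mat_def)
  fix x :: "real^'a" assume x: "x \<noteq> 0"
  have "x \<bullet> (Cmat eps R B P *v x) = (1/eps) * (x \<bullet> (R *v x) + (B *v x) \<bullet> (P *v (B *v x)))"
  proof -
    have "x \<bullet> ((transpose B ** P ** B) *v x) = (B *v x) \<bullet> (P *v (B *v x))"
      by (metis dot_transpose_mat matrix_vector_mul_assoc transpose_transpose)
    then show ?thesis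
      by (simp add: Cmat_def scaleR_matrix_vector_assoc[symmetric] matrix_vector_mult_add_rdistrib
          inner_add_right)
  qed
  moreover have "x \<bullet> (R *v x) > 0" using R x by (simp add: pd_mat_def)
  moreover have "(B *v x) \<bullet> (P *v (B *v x)) \<ge> 0" using P by (simp add: psd_mat_def)
  ultimately show "0 < x \<bullet> (Cmat eps R B P *v x)" using eps by simp
qed

lemma Gm_sqrt:
  assumes S: "psd_mat S" and C: "Cmat_pd C"
  shows "msqrt S ** matrix_inv (mat 1 + msqrt S ** C ** msqrt S) ** msqrt S = Gm C S"
  using push_through(1)[of "msqrt S" C] msqrt_props[OF S] C by (simp add: Gm_def)

lemma Gm_sym:
  assumes S: "psd_mat S" and C: "Cmat_pd C"
  shows "transpose (Gm C S) = Gm C S"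
proof -
  let ?L = "msqrt S"
  have L: "psd_mat ?L" using msqrt_props[OF S] by blast
  have Lsym: "transpose ?L = ?L" using psd_sym[OF L] .
  have Csym: "transpose C = C" using C by (simp add: Cmat_pd_def)
  let ?X = "mat 1 + ?L ** C ** ?L"
  have Xsym: "transpose ?X = ?X"
    by (simp add: transpose_add matrix_transpose_mul Lsym Csym matrix_mul_assoc)
  have "transpose (?L ** matrix_inv ?X ** ?L) = ?L ** matrix_inv ?X ** ?L"
    using transpose_matrix_inv[OF push_through(2)[OF L C]] Xsym Lsym
    by (simp add: matrix_transpose_mul matrix_mul_assoc)
  then show ?thesis using Gm_sqrt[OF S C] by simp
qed

lemma Gm_eq:
  assumes S: "psd_mat S" and C: "Cmat_pd C"
  shows "(mat 1 + S ** C) ** Gm C S = S"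
proof -
  have inv: "invertible (mat 1 + S ** C)"
    using invertible_I_plus_SC[OF S] C by (simp add: Cmat_pd_def)
  show ?thesis unfolding Gm_def by (simp add: matrix_mul_assoc matrix_inv_props(1)[OF inv])
qed

lemma Pi_step_eq:
  assumes eps: "eps > 0" and R: "pd_mat Rk" and P: "psd_mat P" and S: "psd_mat S"
  shows "Pi_step eps Ak Bk Rk S P = Pi_step2 eps Ak Bk Rk S P"
proof -
  have C: "Cmat_pd (Cmat eps Rk Bk P)" using Cmat_pd_lemma[OF eps R P] .
  let ?L = "msqrt S" and ?C = "Cmat eps Rk Bk P"
  have "transpose Ak ** P ** Bk ** ?L ** matrix_inv (mat 1 + ?L ** ?C ** ?L) ** ?L ** transpose Bk ** P ** Ak
     = transpose Ak ** P ** Bk ** (?L ** matrix_inv (mat 1 + ?L ** ?C ** ?L) ** ?L) ** transpose Bk ** P ** Ak"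
    by (simp only: matrix_mul_assoc)
  then show ?thesis unfolding Pi_step_def Pi_step2_def Gm_sqrt[OF S C] by simp
qed

lemma Pi_step2_psd:
  fixes Ak :: "real^'n^'n" and Bk :: "real^'m^'n"
  assumes eps: "eps > 0" and R: "pd_mat Rk" and P: "psd_mat P" and S: "psd_mat S"
  shows "psd_mat (Pi_step2 eps Ak Bk Rk S P)"
proof -
  let ?C = "Cmat eps Rk Bk P"
  let ?G = "Gm ?C S"
  have C: "Cmat_pd ?C" using Cmat_pd_lemma[OF eps R P] .
  have Psym: "transpose P = P" using psd_sym[OF P] .
  have Rsym: "transpose Rk = Rk" using R by (simp add: pd_mat_def)
  have Ssym: "transpose S = S" using psd_sym[OF S] .
  have Gsym: "transpose ?G = ?G" using Gm_sym[OF S C] .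
  define Y where "Y = P - (1/eps) *\<^sub>R (P ** Bk ** ?G ** transpose Bk ** P)"
  have split: "Pi_step2 eps Ak Bk Rk S P = transpose Ak ** Y ** Ak"
    unfolding Pi_step2_def Y_def
    by (simp add: mm_diff_left mm_diff_right matrix_scalar_ac scalar_matrix_assoc matrix_mul_assoc)
  have "psd_mat Y"
    unfolding psd_mat_def
  proof (intro conjI allI)
    show "transpose Y = Y"
      unfolding Y_def using Psym Gsym
      by (simp add: transpose_diff transpose_scalar matrix_transpose_mul matrix_mul_assoc)
    fix y :: "real^'n"
    define z where "z = transpose Bk *v (P *v y)"
    define q where "q = ?G *v z"
    define C' where "C' = Rk + transpose Bk ** P ** Bk"
    have CC': "?C = (1/eps) *\<^sub>R C'" by (simp add: Cmat_def C'_def)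
    define u where "u = (1/eps) *\<^sub>R q"
    define v where "v = (1/eps) *\<^sub>R (z - C' *v u)"
    have q_eq: "q + S *v (?C *v q) = S *v z"
    proof -
      have "(mat 1 + S ** ?C) *v q = S *v z"
        unfolding q_def by (simp add: matrix_vector_mul_assoc Gm_eq[OF S C])
      then show ?thesis by (simp add: matrix_vector_mult_add_rdistrib matrix_vector_mul_assoc)
    qed
    have Cq: "?C *v q = C' *v u"
      by (simp add: CC' u_def scaleR_matrix_vector_assoc[symmetric])
    have Sv: "S *v v = u"
    proof -
      have "S *v v = (1/eps) *\<^sub>R (S *v z - S *v (C' *v u))"
        by (simp add: v_def matrix_vector_mult_diff_distrib)
      also have "S *v z - S *v (C' *v u) = q" using q_eq Cq by (metis add_diff_cancel_right')
      finally show ?thesis by (simp add: u_def)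
    qed
    have lhs: "y \<bullet> (Y *v y) = y \<bullet> (P *v y) - z \<bullet> u"
    proof -
      have "y \<bullet> ((P ** Bk ** ?G ** transpose Bk ** P) *v y) = z \<bullet> q"
      proof -
        have "y \<bullet> ((P ** Bk ** ?G ** transpose Bk ** P) *v y) = y \<bullet> (P *v (Bk *v (?G *v z)))"
          by (simp add: z_def matrix_vector_mul_assoc matrix_mul_assoc)
        also have "\<dots> = (P *v y) \<bullet> (Bk *v (?G *v z))" by (rule dot_sym_mat[OF Psym])
        also have "\<dots> = z \<bullet> q" unfolding z_def q_def by (rule dot_transpose_mat)
        finally show ?thesis .
      qed
      then show ?thesis
        by (simp add: Y_def matrix_vector_mult_diff_rdistrib inner_diff_right
            scaleR_matrix_vector_assoc[symmetric] u_def)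
    qed
    have C'u: "u \<bullet> (C' *v u) = u \<bullet> (Rk *v u) + (Bk *v u) \<bullet> (P *v (Bk *v u))"
    proof -
      have "u \<bullet> ((transpose Bk ** P ** Bk) *v u) = (Bk *v u) \<bullet> (P *v (Bk *v u))"
        by (metis dot_transpose_mat matrix_vector_mul_assoc transpose_transpose)
      then show ?thesis by (simp add: C'_def matrix_vector_mult_add_rdistrib inner_add_right)
    qed
    have vSv: "eps * (v \<bullet> (S *v v)) = z \<bullet> u - u \<bullet> (C' *v u)"
      using eps unfolding Sv by (simp add: v_def inner_diff_left inner_diff_right inner_commute)
    have Bu: "(Bk *v u) \<bullet> (P *v y) = u \<bullet> z"
      unfolding z_def by (metis dot_transpose_mat inner_commute)
    have quad: "(y - Bk *v u) \<bullet> (P *v (y - Bk *v u))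
        = y \<bullet> (P *v y) - 2 * (u \<bullet> z) + (Bk *v u) \<bullet> (P *v (Bk *v u))"
    proof -
      have "y \<bullet> (P *v (Bk *v u)) = (Bk *v u) \<bullet> (P *v y)"
        using dot_sym_mat[OF Psym, of y "Bk *v u"] by (simp add: inner_commute)
      then show ?thesis
        by (simp add: matrix_vector_mult_diff_distrib inner_diff_left inner_diff_right Bu algebra_simps)
    qed
    have key: "y \<bullet> (Y *v y) = (y - Bk *v u) \<bullet> (P *v (y - Bk *v u)) + u \<bullet> (Rk *v u) + eps * (v \<bullet> (S *v v))"
      unfolding lhs quad vSv C'u by (simp add: inner_commute)
    have "(y - Bk *v u) \<bullet> (P *v (y - Bk *v u)) \<ge> 0" using P by (simp add: psd_mat_def)
    moreover have "u \<bullet> (Rk *v u) \<ge> 0" using R by (cases "u = 0") (auto simp: pd_mat_def less_imp_le)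
    moreover have "eps * (v \<bullet> (S *v v)) \<ge> 0" using S eps by (simp add: psd_mat_def)
    ultimately show "0 \<le> y \<bullet> (Y *v y)" unfolding key by linarith
  qed
  then show ?thesis unfolding split by (rule psd_conj)
qed



fun Pi_aux2 :: "real \<Rightarrow> (nat \<Rightarrow> real^'n^'n) \<Rightarrow> (nat \<Rightarrow> real^'m^'n) \<Rightarrow> (nat \<Rightarrow> real^'m^'m)
    \<Rightarrow> real^'n^'n \<Rightarrow> nat \<Rightarrow> (nat \<Rightarrow> real^'m^'m) \<Rightarrow> nat \<Rightarrow> real^'n^'n" where
  "Pi_aux2 eps A B R F T Srho 0 = F"
| "Pi_aux2 eps A B R F T Srho (Suc j) =
     Pi_step2 eps (A (T - Suc j)) (B (T - Suc j)) (R (T - Suc j)) (Srho (T - Suc j))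
       (Pi_aux2 eps A B R F T Srho j)"

definition Pi_mat2 where
  "Pi_mat2 eps A B R F T Srho k = Pi_aux2 eps A B R F T Srho (T - k)"

definition SigmaQ2 where
  "SigmaQ2 eps A B R F T Srho k =
     eps *\<^sub>R matrix_inv (R k + transpose (B k) ** Pi_mat2 eps A B R F T Srho (Suc k) ** B k)"

definition J2 :: "real \<Rightarrow> (nat \<Rightarrow> real^'n^'n) \<Rightarrow> (nat \<Rightarrow> real^'m^'n) \<Rightarrow> (nat \<Rightarrow> real^'m^'m)
    \<Rightarrow> real^'n^'n \<Rightarrow> (nat \<Rightarrow> real^'n^'n) \<Rightarrow> real^'n^'n \<Rightarrow> nat \<Rightarrow> (nat \<Rightarrow> real^'m^'m) \<Rightarrow> real" where
  "J2 eps A B R F Sw Sx T Srho =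
     (1/2) * (trace (Pi_mat2 eps A B R F T Srho 0 ** Sx)
       + (\<Sum>k<T. eps * ln (det (Srho k + SigmaQ2 eps A B R F T Srho k)
                             / det (SigmaQ2 eps A B R F T Srho k))
                 + trace (Pi_mat2 eps A B R F T Srho (Suc k) ** Sw k)))"

lemma Pi_aux_eq:
  assumes eps: "eps > 0" and R: "\<forall>k<T. pd_mat (R k)" and F: "psd_mat F"
    and S: "\<forall>k<T. psd_mat (Srho k)"
  shows "j \<le> T \<Longrightarrow> Pi_aux eps A B R F T Srho j = Pi_aux2 eps A B R F T Srho j
     \<and> psd_mat (Pi_aux2 eps A B R F T Srho j)"
proof (induction j)
  case 0 then show ?case using F by simp
next
  case (Suc j)
  then have IH: "Pi_aux eps A B R F T Srho j = Pi_aux2 eps A B R F T Srho j"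
      "psd_mat (Pi_aux2 eps A B R F T Srho j)" by auto
  have lt: "T - Suc j < T" using Suc.prems by simp
  have Rl: "pd_mat (R (T - Suc j))" using R lt by blast
  have Sl: "psd_mat (Srho (T - Suc j))" using S lt by blast
  show ?case
    using IH Pi_step_eq[OF eps Rl IH(2) Sl] Pi_step2_psd[OF eps Rl IH(2) Sl]
    by simp
qed

lemma Pi_mat_eq:
  assumes eps: "eps > 0" and R: "\<forall>k<T. pd_mat (R k)" and F: "psd_mat F"
    and S: "\<forall>k<T. psd_mat (Srho k)"
  shows "Pi_mat eps A B R F T Srho k = Pi_mat2 eps A B R F T Srho k"
    and "psd_mat (Pi_mat2 eps A B R F T Srho k)"
  using Pi_aux_eq[OF assms, of "T - k"] unfolding Pi_mat_def Pi_mat2_def by auto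

lemma Jcheck_eq:
  assumes eps: "eps > 0" and R: "\<forall>k<T. pd_mat (R k)" and F: "psd_mat F"
    and S: "\<forall>k<T. psd_mat (Srho k)"
  shows "Jcheck eps A B R F Sw Sx T Srho = J2 eps A B R F Sw Sx T Srho"
proof -
  have "Pi_mat eps A B R F T Srho = Pi_mat2 eps A B R F T Srho"
    using Pi_mat_eq(1)[OF assms] by blast
  then show ?thesis
    unfolding Jcheck_def J2_def SigmaQ_def SigmaQ2_def by simp
qed

lemma trace_diff: "trace ((A::real^'n^'n) - B) = trace A - trace B"
  by (simp add: trace_def sum_subtractf)

lemma trace_scale_I: "trace ((S::real^'n^'n) ** (c *\<^sub>R mat 1)) = c * trace S"
proof -
  have "S ** (c *\<^sub>R mat 1) = c *\<^sub>R S" by (metis matrix_mul_rid matrix_scalar_ac scalar_matrix_assoc)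
  then show ?thesis by (simp add: trace_def sum_distrib_left)
qed

lemma det_ratio_bound:
  fixes S C' :: "real^'n^'n"
  assumes eps: "eps > 0" and Csym: "transpose C' = C'" and r: "r > 0"
    and Cr: "\<And>x. r * (x \<bullet> x) \<le> x \<bullet> (C' *v x)" and S: "psd_mat S"
  shows "det (eps *\<^sub>R matrix_inv C') \<noteq> 0"
    and "det (S + eps *\<^sub>R matrix_inv C') / det (eps *\<^sub>R matrix_inv C') \<ge> 1 + (r / eps) * trace S"
proof -
  have Cpd: "0 < x \<bullet> (C' *v x)" if "x \<noteq> 0" for x
    using Cr[of x] r that by (smt (verit) inner_gt_zero_iff mult_pos_pos)
  have invC: "invertible C'" using pd_invertible Cpd by blast
  define K where "K = (1/eps) *\<^sub>R C'"
  define Q where "Q = eps *\<^sub>R matrix_inv C'"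
  have KQ: "K ** Q = mat 1"
    using eps by (simp add: K_def Q_def matrix_scalar_ac scalar_matrix_assoc[symmetric] matrix_inv_props(1)[OF invC])
  have dKQ: "det K * det Q = 1" using det_mul[of K Q] KQ by simp
  then show dQ: "det Q \<noteq> 0" by auto
  then show "det (S + eps *\<^sub>R matrix_inv C') / det (eps *\<^sub>R matrix_inv C') \<ge> 1 + (r / eps) * trace S"
  proof -
    have "S + Q = (mat 1 + S ** K) ** Q"
      by (simp add: mm_add_right matrix_mul_assoc[symmetric] KQ)
    then have ratio: "det (S + Q) / det Q = det (mat 1 + S ** K)"
      using dQ by (simp add: det_mul)
    have Kpsd: "psd_mat K"
      unfolding psd_mat_def
    proof (intro conjI allI)
      show "transpose K = K" using Csym by (simp add: K_def transpose_scalar)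
      fix x
      have "x \<bullet> (C' *v x) \<ge> 0" using Cpd[of x] by (cases "x = 0") auto
      then show "0 \<le> x \<bullet> (K *v x)" using eps
        by (simp add: K_def scaleR_matrix_vector_assoc[symmetric])
    qed
    obtain Lk where Lk: "psd_mat Lk" "Lk ** Lk = K" using sqrt_exists[OF Kpsd] by blast
    have Lsym: "transpose Lk = Lk" using psd_sym[OF Lk(1)] .
    have dK: "det K \<noteq> 0" using dKQ by auto
    have dL: "det Lk \<noteq> 0" using dK det_mul[of Lk Lk] Lk(2) by auto
    define N where "N = Lk ** S ** Lk"
    have Npsd: "psd_mat N" using psd_conj[OF S, of Lk] Lsym by (simp add: N_def)
    have "Lk ** (mat 1 + S ** K) = (mat 1 + N) ** Lk"
      by (simp add: N_def mm_add_left mm_add_right matrix_mul_assoc Lk(2)[symmetric])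
    then have "det Lk * det (mat 1 + S ** K) = det (mat 1 + N) * det Lk"
      by (metis det_mul)
    then have dd: "det (mat 1 + S ** K) = det (mat 1 + N)" using dL by simp
    have trN: "trace N = trace (S ** K)"
    proof -
      have "trace N = trace (Lk ** (S ** Lk))" by (simp add: N_def matrix_mul_assoc)
      also have "\<dots> = trace ((S ** Lk) ** Lk)" by (rule trace_mul_sym)
      also have "\<dots> = trace (S ** K)" by (simp add: Lk(2)[symmetric] matrix_mul_assoc)
      finally show ?thesis .
    qed
    have Dpsd: "psd_mat (K - (r/eps) *\<^sub>R mat 1)"
      unfolding psd_mat_def
    proof (intro conjI allI)
      show "transpose (K - (r / eps) *\<^sub>R mat 1) = K - (r / eps) *\<^sub>R mat 1"
        using Csym by (simp add: K_def transpose_diff transpose_scalar)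
      fix x
      have "x \<bullet> ((K - (r / eps) *\<^sub>R mat 1) *v x) = (1/eps) * (x \<bullet> (C' *v x) - r * (x \<bullet> x))"
        by (simp add: K_def matrix_vector_mult_diff_rdistrib scaleR_matrix_vector_assoc[symmetric]
            inner_diff_right algebra_simps)
      then show "0 \<le> x \<bullet> ((K - (r / eps) *\<^sub>R mat 1) *v x)" using Cr[of x] eps by simp
    qed
    have "trace (S ** (K - (r/eps) *\<^sub>R mat 1)) \<ge> 0" by (rule trace_psd_mult[OF S Dpsd])
    then have "trace (S ** K) \<ge> (r/eps) * trace S"
      by (simp add: mm_diff_left trace_diff trace_scale_I)
    moreover have "det (mat 1 + N) \<ge> 1 + trace N" by (rule det_I_plus_psd[OF Npsd])
    ultimately show ?thesis using ratio dd trN by (simp add: Q_def)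
  qed
qed



lemma sigma_facts:
  fixes Rk :: "real^'m^'m" and Bk :: "real^'m^'n"
  assumes eps: "eps > 0" and R: "pd_mat Rk"
  shows "\<exists>r>0. \<forall>P S. psd_mat P \<longrightarrow> psd_mat S \<longrightarrow>
    det (Rk + transpose Bk ** P ** Bk) \<noteq> 0 \<and> det (eps *\<^sub>R matrix_inv (Rk + transpose Bk ** P ** Bk)) \<noteq> 0 \<and>
    det (S + eps *\<^sub>R matrix_inv (Rk + transpose Bk ** P ** Bk)) / det (eps *\<^sub>R matrix_inv (Rk + transpose Bk ** P ** Bk))
      \<ge> 1 + (r / eps) * trace S"
proof -
  obtain r where r: "r > 0" "\<And>x. r * (x \<bullet> x) \<le> x \<bullet> (Rk *v x)" using pd_lower[OF R] by blast
  have "det (Rk + transpose Bk ** P ** Bk) \<noteq> 0 \<and> det (eps *\<^sub>R matrix_inv (Rk + transpose Bk ** P ** Bk)) \<noteq> 0 \<and>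
    det (S + eps *\<^sub>R matrix_inv (Rk + transpose Bk ** P ** Bk)) / det (eps *\<^sub>R matrix_inv (Rk + transpose Bk ** P ** Bk))
      \<ge> 1 + (r / eps) * trace S" if P: "psd_mat P" and S: "psd_mat S" for P S
  proof -
    let ?C = "Rk + transpose Bk ** P ** Bk"
    have sym: "transpose ?C = ?C"
      using R P by (simp add: transpose_add matrix_transpose_mul matrix_mul_assoc pd_mat_def psd_mat_def)
    have Cr: "r * (x \<bullet> x) \<le> x \<bullet> (?C *v x)" for x
    proof -
      have "x \<bullet> ((transpose Bk ** P ** Bk) *v x) = (Bk *v x) \<bullet> (P *v (Bk *v x))"
        by (metis dot_transpose_mat matrix_vector_mul_assoc transpose_transpose)
      moreover have "(Bk *v x) \<bullet> (P *v (Bk *v x)) \<ge> 0" using P by (simp add: psd_mat_def)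
      ultimately show ?thesis using r(2)[of x]
        by (simp add: matrix_vector_mult_add_rdistrib inner_add_right)
    qed
    have "invertible ?C"
      by (rule pd_invertible) (metis Cr r(1) inner_gt_zero_iff mult_pos_pos order_less_le_trans)
    then have "det ?C \<noteq> 0" by (simp add: invertible_det_nz)
    with det_ratio_bound[OF eps sym r(1) Cr S] show ?thesis by blast
  qed
  then show ?thesis using r(1) by blast
qed

lemma tendsto_Cmat:
  assumes "(Pf \<longlongrightarrow> P0) F"
  shows "((\<lambda>x. Cmat eps Rk Bk (Pf x)) \<longlongrightarrow> Cmat eps Rk Bk P0) F"
  unfolding Cmat_def by (intro tendsto_intros tendsto_mm tendsto_const assms)

lemma tendsto_Pi_step2:
  fixes Ak :: "real^'n^'n" and Bk :: "real^'m^'n"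
  assumes eps: "eps > 0" and R: "pd_mat Rk" and P0: "psd_mat P0" and S0: "psd_mat S0"
    and Sf: "(Sf \<longlongrightarrow> S0) F" and Pf: "(Pf \<longlongrightarrow> P0) F"
  shows "((\<lambda>x. Pi_step2 eps Ak Bk Rk (Sf x) (Pf x)) \<longlongrightarrow> Pi_step2 eps Ak Bk Rk S0 P0) F"
proof -
  have C: "Cmat_pd (Cmat eps Rk Bk P0)" using Cmat_pd_lemma[OF eps R P0] .
  have "invertible (mat 1 + S0 ** Cmat eps Rk Bk P0)"
    using invertible_I_plus_SC[OF S0] C by (simp add: Cmat_pd_def)
  then have d: "det (mat 1 + S0 ** Cmat eps Rk Bk P0) \<noteq> 0" by (simp add: invertible_det_nz)
  have G: "((\<lambda>x. Gm (Cmat eps Rk Bk (Pf x)) (Sf x)) \<longlongrightarrow> Gm (Cmat eps Rk Bk P0) S0) F"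
    unfolding Gm_def
    by (intro tendsto_mm tendsto_matrix_inv tendsto_add tendsto_const tendsto_Cmat Sf Pf d)
  show ?thesis unfolding Pi_step2_def
    by (intro tendsto_diff tendsto_scaleR tendsto_const tendsto_mm tendsto_transpose G Pf)
qed

lemma tendsto_Pi_aux2:
  assumes eps: "eps > 0" and R: "\<forall>k<T. pd_mat (R k)" and F: "psd_mat F"
    and Y: "\<forall>k<T. psd_mat (Y k)" and X: "\<forall>k<T. ((\<lambda>x. Xf x k) \<longlongrightarrow> Y k) Fl"
  shows "i \<le> T \<Longrightarrow> ((\<lambda>x. Pi_aux2 eps A B R F T (Xf x) i) \<longlongrightarrow> Pi_aux2 eps A B R F T Y i) Fl"
proof (induction i)
  case 0 then show ?case by simp
next
  case (Suc i)
  have lt: "T - Suc i < T" using Suc.prems by simp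
  have P0: "psd_mat (Pi_aux2 eps A B R F T Y i)"
    using Pi_aux_eq[OF eps R F Y] Suc.prems by simp
  have Rl: "pd_mat (R (T - Suc i))" using R lt by blast
  have Sl: "psd_mat (Y (T - Suc i))" using Y lt by blast
  have Xl: "((\<lambda>x. Xf x (T - Suc i)) \<longlongrightarrow> Y (T - Suc i)) Fl" using X lt by blast
  show ?case
    using tendsto_Pi_step2[OF eps Rl P0 Sl Xl Suc.IH] Suc.prems by simp
qed

lemma tendsto_J2:
  fixes A :: "nat \<Rightarrow> real^'n^'n" and B :: "nat \<Rightarrow> real^'m^'n"
  assumes eps: "eps > 0" and R: "\<forall>k<T. pd_mat (R k)" and F: "psd_mat F"
    and Y: "\<forall>k<T. psd_mat (Y k)" and X: "\<forall>k<T. ((\<lambda>x. Xf x k) \<longlongrightarrow> Y k) Fl"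
  shows "((\<lambda>x. J2 eps A B R F Sw Sx T (Xf x)) \<longlongrightarrow> J2 eps A B R F Sw Sx T Y) Fl"
proof -
  have Pm: "((\<lambda>x. Pi_mat2 eps A B R F T (Xf x) k) \<longlongrightarrow> Pi_mat2 eps A B R F T Y k) Fl" for k
    unfolding Pi_mat2_def by (rule tendsto_Pi_aux2[OF eps R F Y X]) simp
  have trm: "((\<lambda>x. eps * ln (det (Xf x k + SigmaQ2 eps A B R F T (Xf x) k)
                             / det (SigmaQ2 eps A B R F T (Xf x) k)))
      \<longlongrightarrow> eps * ln (det (Y k + SigmaQ2 eps A B R F T Y k) / det (SigmaQ2 eps A B R F T Y k))) Fl"
    if k: "k < T" for k
  proof -
    have Rk: "pd_mat (R k)" using R k by blast
    obtain r where r: "r > 0" and rb: "\<forall>P S. psd_mat P \<longrightarrow> psd_mat S \<longrightarrow>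
      det (R k + transpose (B k) ** P ** B k) \<noteq> 0 \<and> det (eps *\<^sub>R matrix_inv (R k + transpose (B k) ** P ** B k)) \<noteq> 0 \<and>
      det (S + eps *\<^sub>R matrix_inv (R k + transpose (B k) ** P ** B k)) / det (eps *\<^sub>R matrix_inv (R k + transpose (B k) ** P ** B k))
        \<ge> 1 + (r / eps) * trace S"
      using sigma_facts[OF eps Rk, of "B k"] by blast
    have P0: "psd_mat (Pi_mat2 eps A B R F T Y (Suc k))" using Pi_mat_eq(2)[OF eps R F Y] .
    have Yk: "psd_mat (Y k)" using Y k by blast
    have Xk: "((\<lambda>x. Xf x k) \<longlongrightarrow> Y k) Fl" using X k by blast
    let ?C0 = "R k + transpose (B k) ** Pi_mat2 eps A B R F T Y (Suc k) ** B k"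
    from rb P0 Yk have dQ: "det (eps *\<^sub>R matrix_inv ?C0) \<noteq> 0"
      and ratio: "det (Y k + eps *\<^sub>R matrix_inv ?C0) / det (eps *\<^sub>R matrix_inv ?C0) \<ge> 1 + (r / eps) * trace (Y k)"
      by blast+
    have "trace (Y k) \<ge> 0" using trace_psd_nonneg[OF Yk] .
    then have rpos: "det (Y k + eps *\<^sub>R matrix_inv ?C0) / det (eps *\<^sub>R matrix_inv ?C0) > 0"
      using ratio r eps by (smt (verit) divide_nonneg_pos mult_nonneg_nonneg)
    from rb P0 Yk have dC: "det ?C0 \<noteq> 0" by blast
    have Q: "((\<lambda>x. SigmaQ2 eps A B R F T (Xf x) k) \<longlongrightarrow> SigmaQ2 eps A B R F T Y k) Fl"
      unfolding SigmaQ2_def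
      by (intro tendsto_scaleR tendsto_const tendsto_matrix_inv tendsto_add tendsto_mm Pm dC)
    have dQ': "det (SigmaQ2 eps A B R F T Y k) \<noteq> 0" using dQ by (simp add: SigmaQ2_def)
    have rpos': "0 < det (Y k + SigmaQ2 eps A B R F T Y k) / det (SigmaQ2 eps A B R F T Y k)"
      using rpos by (simp add: SigmaQ2_def)
    show ?thesis
      by (intro tendsto_mult tendsto_const tendsto_ln tendsto_divide tendsto_det tendsto_add Xk Q rpos' dQ' less_imp_neq[OF rpos', symmetric])
  qed
  show ?thesis
    unfolding J2_def
    by (intro tendsto_mult tendsto_const tendsto_add tendsto_sum tendsto_trace tendsto_mm Pm trm) auto
qed



lemma pd_psd: "pd_mat M \<Longrightarrow> psd_mat M"
  unfolding pd_mat_def psd_mat_def by (metis inner_zero_left matrix_vector_mult_0_right order_refl less_imp_le)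

lemma psd_zero: "psd_mat (0::real^'n^'n)"
  by (simp add: psd_mat_def vec_eq_iff transpose_def)

lemma tendsto_mv:
  fixes f :: "'a \<Rightarrow> real^'n^'m"
  assumes "(f \<longlongrightarrow> A) F"
  shows "((\<lambda>x. f x *v v) \<longlongrightarrow> A *v v) F"
  unfolding matrix_vector_mult_def
  by (intro vec_tendstoI) (simp, intro tendsto_sum tendsto_mult tendsto_const mat_tendstoD assms)

lemma psd_limit:
  fixes f :: "nat \<Rightarrow> real^'n^'n"
  assumes "\<And>j. psd_mat (f j)" "f \<longlonglongrightarrow> L"
  shows "psd_mat L"
  unfolding psd_mat_def
proof (intro conjI allI)
  have "(\<lambda>j. transpose (f j)) \<longlonglongrightarrow> transpose L" by (rule tendsto_transpose[OF assms(2)])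
  moreover have "(\<lambda>j. transpose (f j)) = f" using assms(1) by (simp add: psd_sym)
  ultimately show "transpose L = L" using assms(2) LIMSEQ_unique by metis
  fix x
  have "(\<lambda>j. x \<bullet> (f j *v x)) \<longlonglongrightarrow> x \<bullet> (L *v x)"
    by (intro tendsto_inner tendsto_const tendsto_mv assms(2))
  then show "0 \<le> x \<bullet> (L *v x)"
    by (rule LIMSEQ_le_const) (use assms(1) psd_mat_def in auto)
qed

lemma subseq_multi:
  fixes Xs :: "nat \<Rightarrow> nat \<Rightarrow> real^'m^'m"
  assumes bd: "\<And>k. k < T \<Longrightarrow> bounded (range (\<lambda>j. Xs j k))"
  shows "T' \<le> T \<Longrightarrow> \<exists>r Y. strict_mono r \<and> (\<forall>k<T'. (\<lambda>j. Xs (r j) k) \<longlonglongrightarrow> Y k)"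
proof (induction T')
  case 0
  show ?case by (rule exI[of _ id]) (auto simp: strict_mono_def)
next
  case (Suc T')
  then obtain r Y where r: "strict_mono r" and Y: "\<forall>k<T'. (\<lambda>j. Xs (r j) k) \<longlonglongrightarrow> Y k" by auto
  have "bounded (range (\<lambda>j. Xs j T'))" using bd[of T'] Suc.prems by simp
  moreover have "range (\<lambda>j. Xs (r j) T') \<subseteq> range (\<lambda>j. Xs j T')" by auto
  ultimately have "bounded (range (\<lambda>j. Xs (r j) T'))" by (rule bounded_subset)
  then obtain l r2 where r2: "strict_mono r2" and l: "((\<lambda>j. Xs (r j) T') \<circ> r2) \<longlonglongrightarrow> l"
    using bounded_imp_convergent_subsequence by blast
  have "strict_mono (r \<circ> r2)" using r r2 by (simp add: strict_mono_def)
  moreover have "\<forall>k<Suc T'. (\<lambda>j. Xs ((r \<circ> r2) j) k) \<longlonglongrightarrow> (Y(T' := l)) k"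
  proof (intro allI impI)
    fix k assume k: "k < Suc T'"
    show "(\<lambda>j. Xs ((r \<circ> r2) j) k) \<longlonglongrightarrow> (Y(T' := l)) k"
    proof (cases "k = T'")
      case True then show ?thesis using l by (simp add: o_def)
    next
      case False
      then have "(\<lambda>j. Xs (r j) k) \<longlonglongrightarrow> Y k" using Y k by auto
      from LIMSEQ_subseq_LIMSEQ[OF this r2] show ?thesis using False by (simp add: o_def)
    qed
  qed
  ultimately show ?case by blast
qed

theorem proposition4:
  fixes eps :: real and T :: nat
    and A :: "nat \<Rightarrow> real^'n^'n" and B :: "nat \<Rightarrow> real^'m^'n"
    and R :: "nat \<Rightarrow> real^'m^'m" and Sw :: "nat \<Rightarrow> real^'n^'n"
    and F :: "real^'n^'n" and Sx :: "real^'n^'n"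
  assumes "T \<ge> 1" and "eps > 0"
    and "\<And>k. k < T \<Longrightarrow> pd_mat (R k)"
    and "\<And>k. k < T \<Longrightarrow> pd_mat (Sw k)"
    and "pd_mat F" and "pd_mat Sx"
  shows "\<exists>Srho :: nat \<Rightarrow> real^'m^'m. (\<forall>k<T. psd_mat (Srho k)) \<and>
           (\<forall>Srho' :: nat \<Rightarrow> real^'m^'m. (\<forall>k<T. psd_mat (Srho' k)) \<longrightarrow>
              Jcheck eps A B R F Sw Sx T Srho \<le> Jcheck eps A B R F Sw Sx T Srho')"
proof -
  note eps = assms(2)
  have R: "\<forall>k<T. pd_mat (R k)" using assms(3) by blast
  have Sw: "\<forall>k<T. psd_mat (Sw k)" using assms(4) pd_psd by blast
  have F: "psd_mat F" using assms(5) pd_psd by blast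
  have Sx: "psd_mat Sx" using assms(6) pd_psd by blast
  let ?J = "J2 eps A B R F Sw Sx T"
  define dom where "dom = {X :: nat \<Rightarrow> real^'m^'m. \<forall>k<T. psd_mat (X k)}"
  have "\<forall>k<T. \<exists>r>0. \<forall>P S. psd_mat P \<longrightarrow> psd_mat S \<longrightarrow>
    det (R k + transpose (B k) ** P ** B k) \<noteq> 0 \<and> det (eps *\<^sub>R matrix_inv (R k + transpose (B k) ** P ** B k)) \<noteq> 0 \<and>
    det (S + eps *\<^sub>R matrix_inv (R k + transpose (B k) ** P ** B k)) / det (eps *\<^sub>R matrix_inv (R k + transpose (B k) ** P ** B k))
      \<ge> 1 + (r / eps) * trace S"
    using sigma_facts[OF eps] R by blast
  then obtain rr where rr: "\<forall>k<T. rr k > 0 \<and> (\<forall>P S. psd_mat P \<longrightarrow> psd_mat S \<longrightarrow>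
    det (R k + transpose (B k) ** P ** B k) \<noteq> 0 \<and> det (eps *\<^sub>R matrix_inv (R k + transpose (B k) ** P ** B k)) \<noteq> 0 \<and>
    det (S + eps *\<^sub>R matrix_inv (R k + transpose (B k) ** P ** B k)) / det (eps *\<^sub>R matrix_inv (R k + transpose (B k) ** P ** B k))
      \<ge> 1 + (rr k / eps) * trace S)"
    by metis
  have lower: "?J X \<ge> 0 \<and> (\<forall>k<T. ?J X \<ge> (eps / 2) * ln (1 + (rr k / eps) * trace (X k)))"
    if X: "X \<in> dom" for X
  proof -
    have Xp: "\<forall>k<T. psd_mat (X k)" using X by (simp add: dom_def)
    have Pp: "psd_mat (Pi_mat2 eps A B R F T X k)" for k using Pi_mat_eq(2)[OF eps R F Xp] .
    define a where "a k = eps * ln (det (X k + SigmaQ2 eps A B R F T X k) / det (SigmaQ2 eps A B R F T X k))" for k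
    define b where "b k = trace (Pi_mat2 eps A B R F T X (Suc k) ** Sw k)" for k
    have t0: "trace (Pi_mat2 eps A B R F T X 0 ** Sx) \<ge> 0" by (rule trace_psd_mult[OF Pp Sx])
    have b0: "b k \<ge> 0" if "k < T" for k unfolding b_def using Sw that by (intro trace_psd_mult[OF Pp]) auto
    have alow: "a k \<ge> eps * ln (1 + (rr k / eps) * trace (X k))" and a0: "eps * ln (1 + (rr k / eps) * trace (X k)) \<ge> 0"
      if k: "k < T" for k
    proof -
      have Xk: "psd_mat (X k)" using Xp k by blast
      have trX: "trace (X k) \<ge> 0" using trace_psd_nonneg[OF Xk] .
      have rk: "rr k > 0" using rr k by blast
      have c: "(rr k / eps) * trace (X k) \<ge> 0" using rk eps trX by simp
      have rat: "det (X k + SigmaQ2 eps A B R F T X k) / det (SigmaQ2 eps A B R F T X k) \<ge> 1 + (rr k / eps) * trace (X k)"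
        using rr k Pp Xk unfolding SigmaQ2_def by blast
      have "ln (1 + (rr k / eps) * trace (X k)) \<le> ln (det (X k + SigmaQ2 eps A B R F T X k) / det (SigmaQ2 eps A B R F T X k))"
        using rat c by (subst ln_le_cancel_iff) auto
      then show "a k \<ge> eps * ln (1 + (rr k / eps) * trace (X k))" unfolding a_def using eps by simp
      show "eps * ln (1 + (rr k / eps) * trace (X k)) \<ge> 0" using c eps by simp
    qed
    have J: "?J X = (1/2) * (trace (Pi_mat2 eps A B R F T X 0 ** Sx) + (\<Sum>k<T. a k + b k))"
      unfolding J2_def a_def b_def ..
    have ab0: "a k + b k \<ge> 0" if "k < T" for k using alow[OF that] a0[OF that] b0[OF that] by linarith
    have "(\<Sum>k<T. a k + b k) \<ge> 0" by (rule sum_nonneg) (use ab0 in auto)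
    then have "?J X \<ge> 0" unfolding J using t0 by simp
    moreover have "?J X \<ge> (eps / 2) * ln (1 + (rr k / eps) * trace (X k))" if k: "k < T" for k
    proof -
      have "a k + b k \<le> (\<Sum>k<T. a k + b k)"
        by (rule member_le_sum) (use k ab0 in auto)
      then have "a k \<le> (\<Sum>k<T. a k + b k)" using b0[OF k] by linarith
      then show ?thesis unfolding J using alow[OF k] t0 by simp
    qed
    ultimately show ?thesis by blast
  qed
  have coer: "norm (X k) \<le> real CARD('m) * real CARD('m) * ((exp (2 * M / eps) - 1) * eps / rr k)"
    if X: "X \<in> dom" and JM: "?J X \<le> M" and k: "k < T" for X M k
  proof -
    have Xk: "psd_mat (X k)" using X k by (simp add: dom_def)
    have rk: "rr k > 0" using rr k by blast
    have trX: "trace (X k) \<ge> 0" using trace_psd_nonneg[OF Xk] .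
    have c: "1 + (rr k / eps) * trace (X k) > 0" using rk eps trX by (simp add: add_pos_nonneg)
    have "(eps / 2) * ln (1 + (rr k / eps) * trace (X k)) \<le> M" using lower[OF X] k JM by fastforce
    then have "ln (1 + (rr k / eps) * trace (X k)) \<le> 2 * M / eps" using eps by (simp add: field_simps)
    then have "1 + (rr k / eps) * trace (X k) \<le> exp (2 * M / eps)" using c by (metis exp_le_cancel_iff exp_ln)
    then have "trace (X k) \<le> (exp (2 * M / eps) - 1) * eps / rr k"
      using rk eps by (simp add: field_simps)
    then show ?thesis
      using psd_norm_le_trace[OF Xk] by (smt (verit) mult_left_mono of_nat_0_le_iff zero_le_mult_iff)
  qed
  have zdom: "(\<lambda>k. 0) \<in> dom" by (simp add: dom_def psd_zero)
  define m where "m = Inf (?J ` dom)"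
  have bdd: "bdd_below (?J ` dom)" using lower by (auto intro: bdd_belowI[of _ 0])
  have mle: "m \<le> ?J X" if "X \<in> dom" for X unfolding m_def using bdd that by (simp add: cInf_lower)
  have "\<exists>X\<in>dom. ?J X < m + inverse (real (Suc j))" for j
  proof -
    have "Inf (?J ` dom) < m + inverse (real (Suc j))" unfolding m_def by simp
    then obtain v where "v \<in> ?J ` dom" "v < m + inverse (real (Suc j))"
      using cInf_lessD[of "?J ` dom"] zdom by blast
    then show ?thesis by blast
  qed
  then obtain Xs where Xs: "\<And>j. Xs j \<in> dom" and Xsl: "\<And>j. ?J (Xs j) < m + inverse (real (Suc j))"
    by metis
  have Jlim: "(\<lambda>j. ?J (Xs j)) \<longlonglongrightarrow> m"
  proof (rule tendsto_sandwich[of "\<lambda>j. m" _ _ "\<lambda>j. m + inverse (real (Suc j))"])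
    show "\<forall>\<^sub>F j in sequentially. m \<le> ?J (Xs j)" using mle Xs by simp
    show "\<forall>\<^sub>F j in sequentially. ?J (Xs j) \<le> m + inverse (real (Suc j))" using Xsl by (simp add: less_imp_le)
    show "(\<lambda>j. m) \<longlonglongrightarrow> m" by simp
    show "(\<lambda>j. m + inverse (real (Suc j))) \<longlonglongrightarrow> m" by (rule LIMSEQ_inverse_real_of_nat_add)
  qed
  have JM: "?J (Xs j) \<le> m + 1" for j
  proof -
    have "inverse (real (Suc j)) \<le> 1" by (simp add: inverse_le_1_iff)
    then show ?thesis using Xsl[of j] by linarith
  qed
  have bd: "bounded (range (\<lambda>j. Xs j k))" if k: "k < T" for k
    unfolding bounded_iff using coer[OF Xs JM k] by blast
  obtain r Y where r: "strict_mono r" and Y: "\<forall>k<T. (\<lambda>j. Xs (r j) k) \<longlonglongrightarrow> Y k"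
  proof -
    have "\<exists>r Y. strict_mono r \<and> (\<forall>k<T. (\<lambda>j. Xs (r j) k) \<longlonglongrightarrow> Y k)"
      by (rule subseq_multi[of T Xs T]) (use bd in auto)
    then show ?thesis using that by blast
  qed
  define Y0 where "Y0 k = (if k < T then Y k else 0)" for k
  have Y0lim: "\<forall>k<T. (\<lambda>j. Xs (r j) k) \<longlonglongrightarrow> Y0 k" using Y by (simp add: Y0_def)
  have Y0dom: "\<forall>k<T. psd_mat (Y0 k)"
  proof (intro allI impI)
    fix k assume k: "k < T"
    have p: "psd_mat (Xs (r j) k)" for j using Xs k by (simp add: dom_def)
    have l: "(\<lambda>j. Xs (r j) k) \<longlonglongrightarrow> Y0 k" using Y0lim k by blast
    show "psd_mat (Y0 k)" by (rule psd_limit[OF p l])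
  qed
  have "(\<lambda>j. ?J (Xs (r j))) \<longlonglongrightarrow> ?J Y0"
    by (rule tendsto_J2[OF eps R F Y0dom Y0lim])
  moreover have "(\<lambda>j. ?J (Xs (r j))) \<longlonglongrightarrow> m"
    using LIMSEQ_subseq_LIMSEQ[OF Jlim r] by (simp add: o_def)
  ultimately have JY0: "?J Y0 = m" using LIMSEQ_unique by blast
  show ?thesis
  proof (rule exI[of _ Y0], intro conjI)
    show "\<forall>k<T. psd_mat (Y0 k)" using Y0dom .
    show "\<forall>S'. (\<forall>k<T. psd_mat (S' k)) \<longrightarrow>
      Jcheck eps A B R F Sw Sx T Y0 \<le> Jcheck eps A B R F Sw Sx T S'"
    proof (intro allI impI)
    fix S' :: "nat \<Rightarrow> real^'m^'m" assume S': "\<forall>k<T. psd_mat (S' k)"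
    have "Jcheck eps A B R F Sw Sx T Y0 = ?J Y0" using Jcheck_eq[OF eps R F Y0dom] .
    also have "\<dots> \<le> ?J S'" using JY0 mle S' by (simp add: dom_def)
    also have "\<dots> = Jcheck eps A B R F Sw Sx T S'" using Jcheck_eq[OF eps R F S'] by simp
    finally show "Jcheck eps A B R F Sw Sx T Y0 \<le> Jcheck eps A B R F Sw Sx T S'" .
    qed
  qed
qed


end
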